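(* Fix a positive integer $N$ and a real $c>0$. For each integer $K\ge2$ let $M_K$ be a positive integer, with $M_K/(KN)\to c$ as $K\to\infty$, and let $$d^*_\mathrm{sum}(K)=\min\left\{\frac{3M_K}{2},\ \max\left\{M_K+\frac{5M_KN}{9M_K+N},\ \frac{\sqrt{3K}N}{2}\right\},\ M_K+\frac{KN^2}{3M_K},\ KN\right\}$$ be the achievable total DoF of the symmetric multi-relay MIMO Y channel with three $M_K$-antenna users and $K$ relays with $N$ antennas each. Then, with $N_\mathrm{total}=KN$, $\lim_{K\to\infty}\frac{d^*_\mathrm{sum}(K)}{N_\mathrm{total}}=\min\{c,1\}$, i.e. asymptotically $\frac{d^*_\mathrm{sum}}{N_\mathrm{total}}=\min\left\{\frac{M}{N_\mathrm{total}},1\right\}$.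
   Context: In the symmetric multi-relay MIMO Y channel (three users with $M$ antennas each exchanging messages pairwise via $K$ half-duplex relays with $N$ antennas each), $d^*_\mathrm{sum}$ denotes the total DoF shown achievable in the paper: $d^*_\mathrm{sum}=\min\{\frac{3M}{2},\max\{M+\frac{5MN}{9M+N},\frac{\sqrt{3K}N}{2}\},M+\frac{KN^2}{3M},KN\}$. $N_\mathrm{total}=KN$ is the total number of relay antennas. *)

theory Defs
  imports Complex_Main
begin

definition dsum_star :: "nat \<Rightarrow> nat \<Rightarrow> nat \<Rightarrow> real" where
  "dsum_star M K N =
     Min {3 * real M / 2,
          max (real M + 5 * real M * real N / (9 * real M + real N))
              (sqrt (3 * real K) * real N / 2),
          real M + real K * (real N)^2 / (3 * real M),
          real K * real N}"

end

theory Submission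
  imports Defs "HOL-Real_Asymp.Real_Asymp"
begin

lemma c4aux: "K>0 \<Longrightarrow> N > 0 \<Longrightarrow> (real (M) + real K * (real N)^2 / (3 * real (M))) / (real K * real N) = real M / (real K * real N) + (1/3) * inverse (real M / (real K * real N)) * (1 / real K)"
  apply (cases "M = 0")
   apply simp
  apply (simp add: divide_simps power2_eq_square)
  done

theorem corollary4:
  fixes N :: nat and c :: real and M :: "nat \<Rightarrow> nat"
  assumes "N > 0" and "c > 0"
    and "\<forall>K\<ge>2. M K > 0"
    and "(\<lambda>K. real (M K) / (real K * real N)) \<longlonglongrightarrow> c"
  shows "(\<lambda>K. dsum_star (M K) K N / (real K * real N)) \<longlonglongrightarrow> min c 1"
proof -
  define x where "x = (\<lambda>K. real (M K) / (real K * real N))"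
  have x: "x \<longlonglongrightarrow> c" using assms(4) by (simp add: x_def)
  define A where "A = (\<lambda>K::nat. 5 * real (M K) * real N / (9 * real (M K) + real N) / (real K * real N))"
  define B where "B = (\<lambda>K::nat. sqrt (3 * real K) / (2 * real K))"
  define C where "C = (\<lambda>K::nat. (1/3) * inverse (x K) * (1 / real K))"
  have eq: "dsum_star (M K) K N / (real K * real N) =
     min (3/2 * x K) (min (max (x K + A K) (B K)) (min (x K + C K) 1))" if "K > 0" for K
  proof -
    have d: "real K * real N > 0" using that assms(1) by simp
    have mm: "min a b / d = min (a/d) (b/d)" "max a b / d = max (a/d) (b/d)" if "d > 0" for a b d :: real
      using that by (simp_all add: min_def max_def divide_le_cancel)
    have c1: "(3 * real (M K) / 2) / (real K * real N) = 3/2 * x K" by (simp add: x_def)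
    have c2: "(real (M K) + 5 * real (M K) * real N / (9 * real (M K) + real N)) / (real K * real N) = x K + A K"
      by (simp add: x_def A_def add_divide_distrib)
    have c3: "sqrt (3 * real K) * real N / 2 / (real K * real N) = B K"
      using assms(1) by (simp add: B_def)
    have c4: "(real (M K) + real K * (real N)^2 / (3 * real (M K))) / (real K * real N) = x K + C K"
      using that assms(1) unfolding x_def C_def by (rule c4aux)
    have c5: "real K * real N / (real K * real N) = 1" using that assms(1) by simp
    show ?thesis unfolding dsum_star_def
      using that assms(1) by (simp add: mm[OF d] c1 c2 c3 c4 c5 del: times_divide_eq_left divide_divide_eq_left)
  qed
  have A0: "A \<longlonglongrightarrow> 0"
  proof (rule tendsto_sandwich[of "\<lambda>_. 0" _ _ "\<lambda>K. 5 / (9 * real K)"])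
    show "\<forall>\<^sub>F n in sequentially. 0 \<le> A n" by (auto simp: A_def)
    show "\<forall>\<^sub>F n in sequentially. A n \<le> 5 / (9 * real n)"
    proof (rule eventually_sequentiallyI[of 1])
      fix K :: nat assume K: "K \<ge> 1"
      show "A K \<le> 5 / (9 * real K)"
      proof (cases "M K = 0")
        case True thus ?thesis by (simp add: A_def)
      next
        case False
        have "5 * real (M K) * real N / (9 * real (M K) + real N) \<le> 5 * real (M K) * real N / (9 * real (M K))"
          using False assms(1) by (intro divide_left_mono) auto
        also have "\<dots> = 5 * real N / 9" using False by simp
        finally have "5 * real (M K) * real N / (9 * real (M K) + real N) / (real K * real N) \<le> 5 * real N / 9 / (real K * real N)"
          using K assms(1) by (intro divide_right_mono) auto
        also have "\<dots> = 5 / (9 * real K)" using assms(1) by simp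
        finally show ?thesis by (simp add: A_def)
      qed
    qed
    show "(\<lambda>_. 0) \<longlonglongrightarrow> (0::real)" by simp
    show "(\<lambda>K. 5 / (9 * real K)) \<longlonglongrightarrow> 0" by real_asymp
  qed
  have B0: "B \<longlonglongrightarrow> 0" unfolding B_def by real_asymp
  have inv0: "(\<lambda>K::nat. 1 / real K) \<longlonglongrightarrow> 0" by real_asymp
  have C0: "C \<longlonglongrightarrow> (1/3) * inverse c * 0" unfolding C_def
    by (intro tendsto_intros x inv0) (use assms(2) in simp)
  have lim: "(\<lambda>K. min (3/2 * x K) (min (max (x K + A K) (B K)) (min (x K + C K) 1)))
     \<longlonglongrightarrow> min (3/2 * c) (min (max (c + 0) 0) (min (c + (1/3) * inverse c * 0) 1))"
    by (intro tendsto_intros x A0 B0 C0)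
  have val: "min (3/2 * c) (min (max (c + 0) 0) (min (c + (1/3) * inverse c * 0) 1)) = min c 1"
    using assms(2) by (simp add: min_def max_def)
  have "\<forall>\<^sub>F K in sequentially. min (3/2 * x K) (min (max (x K + A K) (B K)) (min (x K + C K) 1))
     = dsum_star (M K) K N / (real K * real N)"
    by (rule eventually_sequentiallyI[of 1]) (simp add: eq)
  from tendsto_cong[OF this] lim val show ?thesis by simp
qed

end
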